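(* Let $x_1,x_2>0$ and $\pi\in(0,1)$ be as described in the context, and let $\pi_0=\frac{1-x_1x_2}{x_1+x_2-2x_1x_2}$. Diffusion occurs from a small seed if and only if one of the following holds: (1) $x_1x_2>1$; or (2) $x_1x_2\le1$, $(x_1,x_2)\neq(1,1)$, and $\pi>\pi_0$.
   Context: There are two types $i\in\{1,2\}$, with meeting matrix $\Pi=\begin{pmatrix}\pi&1-\pi\\1-\pi&\pi\end{pmatrix}$, $0<\pi<1$ ($\pi_{ij}$ is the probability a meeting of a type-$i$ agent is with a type-$j$ agent). For each type $i$: $P_i$ is a degree distribution on the nonnegative integers; $w_i(d)>0$ are degree weights for $d$ with $P_i(d)>0$; $f_i(d,a)$ and $g_i(d,a)$ ($0\le a\le d$) are the adoption and abandonment rates of a type-$i$, degree-$d$ agent who meets $a$ adopters, satisfying: $f_i(d,0)=0$; $f_i(d,a)$ nondecreasing in $a$; $f_i(d,1)>0$ for some $d$ with $P_i(d)>0$; $g_i(d,0)>0$; $g_i(d,a)$ nonincreasing in $a$. Let $x_i=\sum_dP_i(d)w_i(d)\,d\,\frac{f_i(d,1)}{g_i(d,0)}$, assumed finite (it is positive), and $$A=\begin{pmatrix}\pi x_1&(1-\pi)x_2\\(1-\pi)x_1&\pi x_2\end{pmatrix}.$$ Diffusion occurs from a small seed means: for every $\varepsilon>0$ there exists $v\in\mathbb{R}^2$ with $0<v_i<\varepsilon$ and $(Av)_i>v_i$ for $i=1,2$. *)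

theory Defs
  imports "HOL-Analysis.Analysis"
begin

text \<open>Index 1 of type 2 is type 1, index 2 is type 2.\<close>

definition A_mat :: "real \<Rightarrow> real \<Rightarrow> real \<Rightarrow> real^2^2" where
  "A_mat p x1 x2 = (\<chi> i j. if i = 1 then (if j = 1 then p * x1 else (1 - p) * x2)
                           else (if j = 1 then (1 - p) * x1 else p * x2))"

definition diffusion_small_seed :: "real \<Rightarrow> real \<Rightarrow> real \<Rightarrow> bool" where
  "diffusion_small_seed p x1 x2 \<longleftrightarrow>
     (\<forall>\<epsilon>>0. \<exists>v :: real^2. (\<forall>i. 0 < v $ i \<and> v $ i < \<epsilon> \<and> (A_mat p x1 x2 *v v) $ i > v $ i))"

end

theory Submission
  imports Defs
begin

lemma Av1: "(A_mat p x1 x2 *v v) $ 1 = p*x1* v$1 + (1-p)*x2* v$2"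
  by (simp add: A_mat_def matrix_vector_mult_def sum_2)
lemma Av2: "(A_mat p x1 x2 *v v) $ 2 = (1-p)*x1* v$1 + p*x2* v$2"
  by (simp add: A_mat_def matrix_vector_mult_def sum_2)

lemma red: "diffusion_small_seed p x1 x2 \<longleftrightarrow>
  (\<exists>u w::real. u>0 \<and> w>0 \<and> p*x1*u + (1-p)*x2*w > u \<and> (1-p)*x1*u + p*x2*w > w)"
proof
  assume "diffusion_small_seed p x1 x2"
  then obtain v :: "real^2" where "\<forall>i. 0 < v $ i \<and> v $ i < 1 \<and> (A_mat p x1 x2 *v v) $ i > v $ i"
    unfolding diffusion_small_seed_def by (meson zero_less_one)
  then show "\<exists>u w::real. u>0 \<and> w>0 \<and> p*x1*u + (1-p)*x2*w > u \<and> (1-p)*x1*u + p*x2*w > w"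
    by (metis Av1 Av2)
next
  assume "\<exists>u w::real. u>0 \<and> w>0 \<and> p*x1*u + (1-p)*x2*w > u \<and> (1-p)*x1*u + p*x2*w > w"
  then obtain u w :: real where uw: "u>0" "w>0" "p*x1*u + (1-p)*x2*w > u" "(1-p)*x1*u + p*x2*w > w"
    by blast
  show "diffusion_small_seed p x1 x2" unfolding diffusion_small_seed_def
  proof (intro allI impI)
    fix e :: real assume e: "e > 0"
    define s where "s = e / (2*(u+w))"
    have s: "s > 0" using e uw by (simp add: s_def)
    have su: "s*u < e" and sw: "s*w < e" using e uw by (auto simp: s_def field_simps intro!: add_pos_pos)
    define v :: "real^2" where "v = vector [s*u, s*w]"
    have "p*x1*(s*u) + (1-p)*x2*(s*w) > s*u"
    proof -
      have "s*(p*x1*u + (1-p)*x2*w) > s*u" using s uw(3) by simp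
      then show ?thesis by (simp add: algebra_simps)
    qed
    moreover have "(1-p)*x1*(s*u) + p*x2*(s*w) > s*w"
    proof -
      have "s*((1-p)*x1*u + p*x2*w) > s*w" using s uw(4) by simp
      then show ?thesis by (simp add: algebra_simps)
    qed
    ultimately show "\<exists>v :: real^2. (\<forall>i. 0 < v $ i \<and> v $ i < e \<and> (A_mat p x1 x2 *v v) $ i > v $ i)"
      using s uw su sw
      by (intro exI[of _ v]) (simp add: forall_2 Av1 Av2 v_def)
  qed
qed

lemma Spos:
  fixes x1 x2 :: real
  assumes "0 < x1" "0 < x2" "x1*x2 \<le> 1" "(x1,x2) \<noteq> (1,1)"
  shows "x1 + x2 - 2*x1*x2 > 0"
proof (rule ccontr)
  assume "\<not> ?thesis"
  hence h: "x1 + x2 \<le> 2*x1*x2" by simp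
  have q: "x1*x2 > 0" using assms by simp
  have "(x1+x2)^2 \<le> (2*x1*x2)^2" using h assms by (intro power_mono) auto
  moreover have "(x1+x2)^2 = (x1-x2)^2 + 4*(x1*x2)" by (simp add: power2_eq_square algebra_simps)
  moreover have "(2*x1*x2)^2 = 4*(x1*x2)*(x1*x2)" by (simp add: power2_eq_square algebra_simps)
  moreover have "(x1*x2)*(x1*x2) \<le> x1*x2" using q assms(3) mult_left_le[of "x1*x2" "x1*x2"] by simp
  ultimately have "(x1-x2)^2 + 4*(x1*x2) \<le> 4*(x1*x2)" by linarith
  hence "(x1-x2)^2 \<le> 0" by simp
  hence "x1 - x2 = 0" using zero_le_power2[of "x1-x2"] by simp
  hence e: "x1 = x2" by simp
  hence "2*x1 \<le> 2*x1*x1" using h by simp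
  hence "x1 \<ge> 1" using assms(1) by simp
  moreover have "x1*x1 \<le> 1" using assms(3) e by simp
  moreover have "x1 \<le> x1*x1" using mult_right_mono[of 1 x1 x1] \<open>x1 \<ge> 1\<close> by simp
  ultimately have "x1 = 1" by linarith
  with e assms(4) show False by simp
qed

lemma arith:
  fixes x1 x2 p :: real
  assumes x1: "0 < x1" and x2: "0 < x2" and p0: "0 < p" and p1: "p < 1"
  shows "(\<exists>u w::real. u>0 \<and> w>0 \<and> p*x1*u + (1-p)*x2*w > u \<and> (1-p)*x1*u + p*x2*w > w)
     \<longleftrightarrow> (x1 * x2 > 1 \<or>
            (x1 * x2 \<le> 1 \<and> (x1, x2) \<noteq> (1, 1) \<and>
             p > (1 - x1 * x2) / (x1 + x2 - 2 * x1 * x2)))"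
proof -
  define a where "a = p*x1"
  define b where "b = (1-p)*x2"
  define c where "c = (1-p)*x1"
  define d where "d = p*x2"
  have bpos: "b > 0" and cpos: "c > 0" using assms by (simp_all add: b_def c_def)
  have Deq: "(1-a)*(1-d) - b*c = (1 - x1*x2) - p*(x1 + x2 - 2*x1*x2)"
    by (simp add: a_def b_def c_def d_def algebra_simps power2_eq_square)
  have D2: "(1-a)*(1-d) - b*c = (1-p)*(1-x1*x2) + p*(1-x1)*(1-x2)"
    by (simp add: a_def b_def c_def d_def algebra_simps power2_eq_square)
  have L: "(\<exists>u w::real. u>0 \<and> w>0 \<and> p*x1*u + (1-p)*x2*w > u \<and> (1-p)*x1*u + p*x2*w > w)
     \<longleftrightarrow> (a \<ge> 1 \<or> d \<ge> 1 \<or> (1-a)*(1-d) - b*c < 0)"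
  proof
    assume "\<exists>u w::real. u>0 \<and> w>0 \<and> p*x1*u + (1-p)*x2*w > u \<and> (1-p)*x1*u + p*x2*w > w"
    then obtain u w :: real where uw: "u>0" "w>0" "(1-a)*u < b*w" "(1-d)*w < c*u"
      unfolding a_def b_def c_def d_def by (auto simp: algebra_simps)
    show "a \<ge> 1 \<or> d \<ge> 1 \<or> (1-a)*(1-d) - b*c < 0"
    proof (rule ccontr)
      assume "\<not> ?thesis"
      hence h: "a < 1" "d < 1" "(1-a)*(1-d) \<ge> b*c" by auto
      have "((1-a)*u)*((1-d)*w) < (b*w)*(c*u)"
        using uw h bpos by (intro mult_strict_mono[OF uw(3) uw(4)]) auto
      hence "((1-a)*(1-d))*(u*w) < (b*c)*(u*w)" by (simp add: algebra_simps)
      hence "(1-a)*(1-d) < b*c" using uw by (simp add: mult_less_cancel_right)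
      with h show False by simp
    qed
  next
    assume H: "a \<ge> 1 \<or> d \<ge> 1 \<or> (1-a)*(1-d) - b*c < 0"
    have "\<exists>u w::real. u>0 \<and> w>0 \<and> (1-a)*u < b*w \<and> (1-d)*w < c*u"
    proof (cases "a \<ge> 1")
      case True
      define w where "w = c / (\<bar>1-d\<bar> + 1)"
      have w: "w > 0" using cpos by (simp add: w_def)
      have "(1-d)*w \<le> \<bar>1-d\<bar>*w" using w by (simp add: mult_right_mono)
      also have "\<dots> < c" using w cpos unfolding w_def by (simp add: field_simps)
      finally have "(1-d)*w < c" .
      moreover have "(1-a)*1 < b*w" using True w bpos by (smt (verit) mult_pos_pos)
      ultimately show ?thesis using w by (intro exI[where x="1::real"] exI[where x=w]) auto
    next
      case F1: False
      show ?thesis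
      proof (cases "d \<ge> 1")
        case True
        define u where "u = b / (\<bar>1-a\<bar> + 1)"
        have u: "u > 0" using bpos by (simp add: u_def)
        have "(1-a)*u \<le> \<bar>1-a\<bar>*u" using u by (simp add: mult_right_mono)
        also have "\<dots> < b" using u bpos unfolding u_def by (simp add: field_simps)
        finally have "(1-a)*u < b" .
        moreover have "(1-d)*1 < c*u" using True u cpos by (smt (verit) mult_pos_pos)
        ultimately show ?thesis using u by (intro exI[where x=u] exI[where x="1::real"]) auto
      next
        case False
        with F1 H have h: "a < 1" "d < 1" "(1-a)*(1-d) < b*c" by auto
        have lt: "(1-a)/b < c/(1-d)" using h bpos by (simp add: field_simps)
        define w where "w = ((1-a)/b + c/(1-d))/2"
        have mid: "\<And>L R::real. L < R \<Longrightarrow> L < (L+R)/2 \<and> (L+R)/2 < R" by (auto simp: field_simps)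
        have w11: "(1-a)/b < w" using mid[OF lt] unfolding w_def by blast
        have w12: "w < c/(1-d)" using mid[OF lt] unfolding w_def by blast
        note w1 = w11 w12
        have "(1-a)/b > 0" using h bpos by simp
        hence w: "w > 0" using w1 by linarith
        have "(1-a)*1 < b*w" using w1(1) bpos by (simp add: field_simps)
        moreover have "(1-d)*w < c*1" using w1(2) h by (simp add: field_simps)
        ultimately show ?thesis using w by (intro exI[where x="1::real"] exI[where x=w]) auto
      qed
    qed
    then show "\<exists>u w::real. u>0 \<and> w>0 \<and> p*x1*u + (1-p)*x2*w > u \<and> (1-p)*x1*u + p*x2*w > w"
      unfolding a_def b_def c_def d_def by (auto simp: algebra_simps)
  qed
  have R: "(a \<ge> 1 \<or> d \<ge> 1 \<or> (1-a)*(1-d) - b*c < 0) \<longleftrightarrow> (x1 * x2 > 1 \<or>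
            (x1 * x2 \<le> 1 \<and> (x1, x2) \<noteq> (1, 1) \<and>
             p > (1 - x1 * x2) / (x1 + x2 - 2 * x1 * x2)))"
  proof
    assume H: "a \<ge> 1 \<or> d \<ge> 1 \<or> (1-a)*(1-d) - b*c < 0"
    show "x1 * x2 > 1 \<or> (x1 * x2 \<le> 1 \<and> (x1, x2) \<noteq> (1, 1) \<and>
             p > (1 - x1 * x2) / (x1 + x2 - 2 * x1 * x2))"
    proof (cases "x1*x2 > 1")
      case True then show ?thesis by simp
    next
      case False
      hence q: "x1*x2 \<le> 1" by simp
      have not11: "(x1,x2) \<noteq> (1,1)"
      proof
        assume "(x1,x2) = (1,1)"
        hence "x1 = 1" "x2 = 1" by auto
        with H p1 show False by (simp add: a_def b_def c_def d_def algebra_simps power2_eq_square)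
      qed
      have S: "x1 + x2 - 2*x1*x2 > 0" using Spos[OF x1 x2 q not11] .
      have Dneg: "(1-a)*(1-d) - b*c < 0"
      proof -
        have "\<not> (a \<ge> 1 \<and> d \<ge> 1)"
        proof
          assume "a \<ge> 1 \<and> d \<ge> 1"
          hence "a*d \<ge> 1" using mult_mono[of 1 a 1 d] by simp
          moreover have "a*d = p*p*(x1*x2)" by (simp add: a_def d_def algebra_simps)
          moreover have "p*p < 1" using mult_strict_mono[of p 1 p 1] p0 p1 by simp
          moreover have "p*p*(x1*x2) \<le> p*p" using q p0 mult_left_le[of "x1*x2" "p*p"] by simp
          ultimately show False by linarith
        qed
        moreover have "a \<ge> 1 \<Longrightarrow> d < 1 \<Longrightarrow> ?thesis"
        proof -
          assume "a \<ge> 1" "d < 1"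
          hence "(1-a)*(1-d) \<le> 0" by (intro mult_nonpos_nonneg) auto
          moreover have "b*c > 0" using bpos cpos by simp
          ultimately show ?thesis by linarith
        qed
        moreover have "d \<ge> 1 \<Longrightarrow> a < 1 \<Longrightarrow> ?thesis"
        proof -
          assume "d \<ge> 1" "a < 1"
          hence "(1-a)*(1-d) \<le> 0" by (intro mult_nonneg_nonpos) auto
          moreover have "b*c > 0" using bpos cpos by simp
          ultimately show ?thesis by linarith
        qed
        ultimately show ?thesis using H by linarith
      qed
      hence "p*(x1 + x2 - 2*x1*x2) > 1 - x1*x2" using Deq by simp
      hence "p > (1 - x1 * x2) / (x1 + x2 - 2 * x1 * x2)" using S by (simp add: field_simps)
      with q not11 show ?thesis by simp
    qed
  next
    assume H: "x1 * x2 > 1 \<or> (x1 * x2 \<le> 1 \<and> (x1, x2) \<noteq> (1, 1) \<and>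
             p > (1 - x1 * x2) / (x1 + x2 - 2 * x1 * x2))"
    show "a \<ge> 1 \<or> d \<ge> 1 \<or> (1-a)*(1-d) - b*c < 0"
    proof (cases "x1*x2 > 1")
      case q: True
      show ?thesis
      proof (rule ccontr)
        assume "\<not> ?thesis"
        hence h: "p*x1 < 1" "p*x2 < 1" "(1-p)*(1-x1*x2) + p*(1-x1)*(1-x2) \<ge> 0"
          using D2 by (auto simp: a_def d_def)
        have t1: "(1-p)*(1-x1*x2) < 0" using q p1 by (simp add: mult_pos_neg)
        show False
        proof (cases "x1 > 1 \<and> x2 > 1")
          case True
          define X where "X = x1 - 1"
          define Y where "Y = x2 - 1"
          have X: "X > 0" "p*X < 1-p" and Y: "Y > 0" "p*Y < 1-p"
            using True h by (auto simp: X_def Y_def algebra_simps)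
          have "(1-p)*X > p*Y*X" using X Y by (simp add: mult_strict_right_mono)
          moreover have "(1-p)*Y > p*X*Y" using X Y by (simp add: mult_strict_right_mono)
          moreover have "p*X*Y > 0" using X Y p0 by simp
          moreover have "X*Y > 0" using X Y by simp
          moreover have "(1-p)*(X+Y) - (2*p-1)*(X*Y) = ((1-p)*X - p*Y*X) + ((1-p)*Y - p*X*Y) + X*Y"
            by (simp add: algebra_simps)
          ultimately have "(1-p)*(X+Y) > (2*p-1)*(X*Y)" by linarith
          moreover have "(1-p)*(1-x1*x2) + p*(1-x1)*(1-x2) = -((1-p)*(X+Y) - (2*p-1)*(X*Y))"
            by (simp add: X_def Y_def algebra_simps)
          ultimately show False using h(3) by linarith
        next
          case False
          have "(1-x1)*(1-x2) \<le> 0"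
          proof -
            have "\<not> (x1 \<le> 1 \<and> x2 \<le> 1)"
            proof
              assume "x1 \<le> 1 \<and> x2 \<le> 1"
              hence "x1*x2 \<le> 1" using x1 x2 by (metis mult_le_one less_imp_le)
              with q show False by simp
            qed
            with False have "(x1 > 1 \<and> x2 \<le> 1) \<or> (x1 \<le> 1 \<and> x2 > 1)" by linarith
            then show ?thesis
            proof
              assume "x1 > 1 \<and> x2 \<le> 1" thus ?thesis by (intro mult_nonpos_nonneg) auto
            next
              assume "x1 \<le> 1 \<and> x2 > 1" thus ?thesis by (intro mult_nonneg_nonpos) auto
            qed
          qed
          hence "p*(1-x1)*(1-x2) \<le> 0" using p0 by (simp add: mult_nonneg_nonpos mult.assoc)
          with t1 h(3) show False by linarith
        qed
      qed
    next
      case False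
      with H have q: "x1*x2 \<le> 1" and n: "(x1,x2) \<noteq> (1,1)"
        and pp: "p > (1 - x1 * x2) / (x1 + x2 - 2 * x1 * x2)" by auto
      have S: "x1 + x2 - 2*x1*x2 > 0" using Spos[OF x1 x2 q n] .
      have "p*(x1 + x2 - 2*x1*x2) > 1 - x1*x2" using pp S by (simp add: field_simps)
      then show ?thesis using Deq by simp
    qed
  qed
  show ?thesis using L R by simp
qed


theorem theorem2:
  fixes x1 x2 p :: real
  assumes "0 < x1" and "0 < x2" and "0 < p" and "p < 1"
  shows "diffusion_small_seed p x1 x2 \<longleftrightarrow>
           (x1 * x2 > 1 \<or>
            (x1 * x2 \<le> 1 \<and> (x1, x2) \<noteq> (1, 1) \<and>
             p > (1 - x1 * x2) / (x1 + x2 - 2 * x1 * x2)))"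
  using red[of p x1 x2] arith[OF assms] by simp

end
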